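(* Let $\{\mu_t:t\ge0\}$ be the solution of $\frac{d}{dt}\mu_t=F(\mu_t)-\mu_t$ with initial condition $\mu_0\in\mathcal P(\mathcal X)$, and assume $\mu_0\ll\lambda$. Assume that for every $\mu\in\mathcal M^+(\mathcal X)$ with $\mu\ll\lambda$ one has $\kappa_1(\mu)(\cdot|y)\ll\lambda$ and $\kappa_2(\mu)(\cdot|x)\ll\lambda$ for all $x,y\in\mathcal X$. Then $\mu_t\ll\lambda$ for all $t\in[0,+\infty)$. Moreover, if there exists $C\in(0,+\infty)$ such that, for all $\mu\in\mathcal M^+(\mathcal X)$ with $\mu\ll\lambda$, $$\Big\|\frac{d\kappa_2(\mu)(\cdot|x)}{d\lambda}\Big\|_\infty\le C\Big\|\frac{d\mu}{d\lambda}\Big\|_\infty\quad\forall x\in\mathcal X,$$ then the densities $f_t=d\mu_t/d\lambda$ satisfy $\|f_t\|_\infty\le\|f_0\|_\infty e^{Ct}$ for all $t\in[0,+\infty)$.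
   Context: $\mathcal X\subseteq\mathbb R^d$ is open, $\lambda$ is Lebesgue measure on $\mathcal X$, $\ll$ denotes absolute continuity. $\kappa(\cdot|\cdot,\cdot)$ is a stochastic kernel from $\mathcal X\times\mathcal X$ to $\mathcal X$ (each $\kappa(\cdot|x,y)$ a probability measure on $\mathcal X$, measurable in $(x,y)$). For $\mu\in\mathcal M^+(\mathcal X)$ (finite nonnegative Borel measures) define $F(\mu)(B):=\int\!\!\int\kappa(B|x,y)\,d\mu(x)\,d\mu(y)$, $\kappa_1(\mu)(B|y):=\int\kappa(B|x,y)\,d\mu(x)$ and $\kappa_2(\mu)(B|x):=\int\kappa(B|x,y)\,d\mu(y)$. A solution of $\frac{d}{dt}\mu_t=F(\mu_t)-\mu_t$ is a family $\{\mu_t\}\subseteq\mathcal P(\mathcal X)$ such that for every continuous $\varphi$ vanishing at infinity, $t\mapsto\int\varphi\,d\mu_t$ is differentiable on $\mathbb R^+$ with derivative $\int\varphi\,dF(\mu_t)-\int\varphi\,d\mu_t$ for $t>0$; it exists and is unique. *)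

theory Defs
  imports "HOL-Probability.Probability"
begin

definition borelX :: "'a::euclidean_space set \<Rightarrow> 'a measure" where
  "borelX X = restrict_space borel X"

definition lebX :: "'a::euclidean_space set \<Rightarrow> 'a measure" where
  "lebX X = restrict_space lborel X"

definition Mplus :: "'a::euclidean_space set \<Rightarrow> 'a measure set" where
  "Mplus X = {\<mu>. finite_measure \<mu> \<and> sets \<mu> = sets (borelX X)}"

definition Pmeas :: "'a::euclidean_space set \<Rightarrow> 'a measure set" where
  "Pmeas X = {\<mu>. prob_space \<mu> \<and> sets \<mu> = sets (borelX X)}"

definition stoch_kernel :: "'a::euclidean_space set \<Rightarrow> ('a \<Rightarrow> 'a \<Rightarrow> 'a measure) \<Rightarrow> bool" where
  "stoch_kernel X \<kappa> \<longleftrightarrow>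
     (\<forall>x\<in>X. \<forall>y\<in>X. \<kappa> x y \<in> Pmeas X) \<and>
     (\<forall>B\<in>sets (borelX X).
        (\<lambda>(x,y). emeasure (\<kappa> x y) B) \<in> borel_measurable (borelX X \<Otimes>\<^sub>M borelX X))"

definition Fop :: "'a::euclidean_space set \<Rightarrow> ('a \<Rightarrow> 'a \<Rightarrow> 'a measure) \<Rightarrow> 'a measure \<Rightarrow> 'a measure" where
  "Fop X \<kappa> \<mu> = measure_of X (sets (borelX X))
     (\<lambda>B. \<integral>\<^sup>+ x. \<integral>\<^sup>+ y. emeasure (\<kappa> x y) B \<partial>\<mu> \<partial>\<mu>)"

definition kappa1 :: "'a::euclidean_space set \<Rightarrow> ('a \<Rightarrow> 'a \<Rightarrow> 'a measure) \<Rightarrow> 'a measure \<Rightarrow> 'a \<Rightarrow> 'a measure" where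
  "kappa1 X \<kappa> \<mu> y = measure_of X (sets (borelX X)) (\<lambda>B. \<integral>\<^sup>+ x. emeasure (\<kappa> x y) B \<partial>\<mu>)"

definition kappa2 :: "'a::euclidean_space set \<Rightarrow> ('a \<Rightarrow> 'a \<Rightarrow> 'a measure) \<Rightarrow> 'a measure \<Rightarrow> 'a \<Rightarrow> 'a measure" where
  "kappa2 X \<kappa> \<mu> x = measure_of X (sets (borelX X)) (\<lambda>B. \<integral>\<^sup>+ y. emeasure (\<kappa> x y) B \<partial>\<mu>)"

(* continuous functions on X vanishing at infinity (C_0(X)) *)
definition C0 :: "'a::euclidean_space set \<Rightarrow> ('a \<Rightarrow> real) \<Rightarrow> bool" where
  "C0 X \<phi> \<longleftrightarrow> continuous_on X \<phi> \<and> (\<forall>e>0. compact {x\<in>X. \<bar>\<phi> x\<bar> \<ge> e})"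

definition is_solution :: "'a::euclidean_space set \<Rightarrow> ('a \<Rightarrow> 'a \<Rightarrow> 'a measure) \<Rightarrow> (real \<Rightarrow> 'a measure) \<Rightarrow> bool" where
  "is_solution X \<kappa> \<mu> \<longleftrightarrow>
     (\<forall>t\<ge>0. \<mu> t \<in> Pmeas X) \<and>
     (\<forall>\<phi>. C0 X \<phi> \<longrightarrow>
        (\<forall>t\<ge>0. (\<lambda>s. integral\<^sup>L (\<mu> s) \<phi>) differentiable (at t within {0..})) \<and>
        (\<forall>t>0. ((\<lambda>s. integral\<^sup>L (\<mu> s) \<phi>) has_real_derivative
                   (integral\<^sup>L (Fop X \<kappa> (\<mu> t)) \<phi> - integral\<^sup>L (\<mu> t) \<phi>)) (at t)))"

definition dens_sup :: "'a::euclidean_space set \<Rightarrow> 'a measure \<Rightarrow> ennreal" where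
  "dens_sup X \<mu> = esssup (lebX X) (RN_deriv (lebX X) \<mu>)"

end

theory Submission
  imports Defs
begin

lemma space_borelX[simp]: "space (borelX X) = X"
  unfolding borelX_def by (simp add: space_restrict_space)

lemma sa_borelX: "sigma_algebra X (sets (borelX X))"
  using sets.sigma_algebra_axioms[of "borelX X"] by simp

lemma kmeas:
  assumes "stoch_kernel X \<kappa>" "B \<in> sets (borelX X)" "sets M = sets (borelX X)" "sets N = sets (borelX X)"
  shows "(\<lambda>(x,y). emeasure (\<kappa> x y) B) \<in> borel_measurable (N \<Otimes>\<^sub>M M)"
proof -
  have 1: "(\<lambda>(x,y). emeasure (\<kappa> x y) B) \<in> borel_measurable (borelX X \<Otimes>\<^sub>M borelX X)"
    using assms(1,2) unfolding stoch_kernel_def by blast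
  have 2: "sets (N \<Otimes>\<^sub>M M) = sets (borelX X \<Otimes>\<^sub>M borelX X)"
    by (rule sets_pair_measure_cong) (rule assms(4), rule assms(3))
  show ?thesis using measurable_cong_sets[OF 2 refl] 1 by blast
qed

lemma kmeas2:
  assumes "stoch_kernel X \<kappa>" "B \<in> sets (borelX X)" "sets M = sets (borelX X)" "x \<in> X"
  shows "(\<lambda>y. emeasure (\<kappa> x y) B) \<in> borel_measurable M"
  using measurable_Pair2[OF kmeas[OF assms(1,2,3), of "borelX X"], of x] assms(4) by simp

lemma kprob:
  assumes "stoch_kernel X \<kappa>" "x \<in> X" "y \<in> X"
  shows "prob_space (\<kappa> x y)" "sets (\<kappa> x y) = sets (borelX X)" "space (\<kappa> x y) = X"
proof -
  show "prob_space (\<kappa> x y)" "sets (\<kappa> x y) = sets (borelX X)"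
    using assms unfolding stoch_kernel_def Pmeas_def by auto
  then show "space (\<kappa> x y) = X" using sets_eq_imp_space_eq[of "\<kappa> x y" "borelX X"] by simp
qed
lemma kappa2_emeasure:
  assumes K: "stoch_kernel X \<kappa>" and sn: "sets \<nu> = sets (borelX X)" and x: "x \<in> X"
    and B: "B \<in> sets (borelX X)"
  shows "emeasure (kappa2 X \<kappa> \<nu> x) B = (\<integral>\<^sup>+y. emeasure (\<kappa> x y) B \<partial>\<nu>)"
proof -
  have sp: "space \<nu> = X" using sets_eq_imp_space_eq[OF sn] by simp
  show ?thesis unfolding kappa2_def
  proof (rule emeasure_measure_of_sigma[OF sa_borelX _ _ B])
    show "positive (sets (borelX X)) (\<lambda>B. \<integral>\<^sup>+ y. emeasure (\<kappa> x y) B \<partial>\<nu>)"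
      by (simp add: positive_def)
    show "countably_additive (sets (borelX X)) (\<lambda>B. \<integral>\<^sup>+ y. emeasure (\<kappa> x y) B \<partial>\<nu>)"
      unfolding countably_additive_def
    proof safe
      fix A :: "nat \<Rightarrow> _" assume A: "range A \<subseteq> sets (borelX X)" "disjoint_family A"
        "\<Union> (range A) \<in> sets (borelX X)"
      have "(\<Sum>i. \<integral>\<^sup>+ y. emeasure (\<kappa> x y) (A i) \<partial>\<nu>) = (\<integral>\<^sup>+ y. (\<Sum>i. emeasure (\<kappa> x y) (A i)) \<partial>\<nu>)"
        by (rule nn_integral_suminf[symmetric]) (use A kmeas2[OF K _ sn x] in auto)
      also have "\<dots> = (\<integral>\<^sup>+ y. emeasure (\<kappa> x y) (\<Union> (range A)) \<partial>\<nu>)"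
      proof (rule nn_integral_cong)
        fix y assume "y \<in> space \<nu>"
        then have y: "y \<in> X" using sp by simp
        show "(\<Sum>i. emeasure (\<kappa> x y) (A i)) = emeasure (\<kappa> x y) (\<Union> (range A))"
          by (rule suminf_emeasure) (use A kprob(2)[OF K x y] in auto)
      qed
      finally show "(\<Sum>i. \<integral>\<^sup>+ y. emeasure (\<kappa> x y) (A i) \<partial>\<nu>) = (\<integral>\<^sup>+ y. emeasure (\<kappa> x y) (\<Union> (range A)) \<partial>\<nu>)" .
    qed
  qed
qed

lemma sets_kappa2: "sets (kappa2 X \<kappa> \<nu> x) = sets (borelX X)"
proof -
  have "sets (borelX X) \<subseteq> Pow X" using sets.space_closed[of "borelX X"] by simp
  then show ?thesis unfolding kappa2_def by (simp add: sigma_algebra.sigma_sets_eq[OF sa_borelX])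
qed

lemma Fop_emeasure:
  assumes K: "stoch_kernel X \<kappa>" and sn: "sets \<nu> = sets (borelX X)" and fin: "finite_measure \<nu>"
    and B: "B \<in> sets (borelX X)"
  shows "emeasure (Fop X \<kappa> \<nu>) B = (\<integral>\<^sup>+x. \<integral>\<^sup>+y. emeasure (\<kappa> x y) B \<partial>\<nu> \<partial>\<nu>)"
proof -
  have sp: "space \<nu> = X" using sets_eq_imp_space_eq[OF sn] by simp
  interpret finite_measure \<nu> by fact
  have meas: "\<And>B. B \<in> sets (borelX X) \<Longrightarrow> (\<lambda>x. \<integral>\<^sup>+y. emeasure (\<kappa> x y) B \<partial>\<nu>) \<in> borel_measurable \<nu>"
    using borel_measurable_nn_integral_fst[OF kmeas[OF K _ sn sn]] by simp
  show ?thesis unfolding Fop_def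
  proof (rule emeasure_measure_of_sigma[OF sa_borelX _ _ B])
    show "positive (sets (borelX X)) (\<lambda>B. \<integral>\<^sup>+x. \<integral>\<^sup>+ y. emeasure (\<kappa> x y) B \<partial>\<nu> \<partial>\<nu>)"
      by (simp add: positive_def)
    show "countably_additive (sets (borelX X)) (\<lambda>B. \<integral>\<^sup>+x. \<integral>\<^sup>+ y. emeasure (\<kappa> x y) B \<partial>\<nu> \<partial>\<nu>)"
      unfolding countably_additive_def
    proof safe
      fix A :: "nat \<Rightarrow> _" assume A: "range A \<subseteq> sets (borelX X)" "disjoint_family A"
        "\<Union> (range A) \<in> sets (borelX X)"
      have "(\<Sum>i. \<integral>\<^sup>+x. \<integral>\<^sup>+ y. emeasure (\<kappa> x y) (A i) \<partial>\<nu> \<partial>\<nu>) = (\<integral>\<^sup>+x. (\<Sum>i. \<integral>\<^sup>+ y. emeasure (\<kappa> x y) (A i) \<partial>\<nu>) \<partial>\<nu>)"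
        by (rule nn_integral_suminf[symmetric]) (use A meas in auto)
      also have "\<dots> = (\<integral>\<^sup>+x. \<integral>\<^sup>+ y. emeasure (\<kappa> x y) (\<Union> (range A)) \<partial>\<nu> \<partial>\<nu>)"
      proof (rule nn_integral_cong)
        fix x assume "x \<in> space \<nu>"
        then have x: "x \<in> X" using sp by simp
        show "(\<Sum>i. \<integral>\<^sup>+ y. emeasure (\<kappa> x y) (A i) \<partial>\<nu>) = \<integral>\<^sup>+ y. emeasure (\<kappa> x y) (\<Union> (range A)) \<partial>\<nu>"
        proof -
          have "(\<Sum>i. \<integral>\<^sup>+ y. emeasure (\<kappa> x y) (A i) \<partial>\<nu>) = (\<Sum>i. emeasure (kappa2 X \<kappa> \<nu> x) (A i))"
            using kappa2_emeasure[OF K sn x] A by auto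
          also have "\<dots> = emeasure (kappa2 X \<kappa> \<nu> x) (\<Union> (range A))"
            by (rule suminf_emeasure) (use A sets_kappa2[of X \<kappa> \<nu> x] in auto)
          also have "\<dots> = \<integral>\<^sup>+ y. emeasure (\<kappa> x y) (\<Union> (range A)) \<partial>\<nu>"
            using kappa2_emeasure[OF K sn x] A by auto
          finally show ?thesis .
        qed
      qed
      finally show "(\<Sum>i. \<integral>\<^sup>+x. \<integral>\<^sup>+ y. emeasure (\<kappa> x y) (A i) \<partial>\<nu> \<partial>\<nu>) = (\<integral>\<^sup>+x. \<integral>\<^sup>+ y. emeasure (\<kappa> x y) (\<Union> (range A)) \<partial>\<nu> \<partial>\<nu>)" .
    qed
  qed
qed

lemma sets_Fop: "sets (Fop X \<kappa> \<nu>) = sets (borelX X)"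
proof -
  have "sets (borelX X) \<subseteq> Pow X" using sets.space_closed[of "borelX X"] by simp
  then show ?thesis unfolding Fop_def by (simp add: sigma_algebra.sigma_sets_eq[OF sa_borelX])
qed




lemma test_fun:
  fixes K :: "'a::euclidean_space set"
  assumes X: "open X" and K: "compact K" "K \<subseteq> X" "K \<noteq> {}"
  obtains \<phi> :: "nat \<Rightarrow> 'a \<Rightarrow> real" where "\<And>n. C0 X (\<phi> n)" "\<And>n x. 0 \<le> \<phi> n x" "\<And>n x. \<phi> n x \<le> 1"
    "\<And>n x. \<phi> (Suc n) x \<le> \<phi> n x" "\<And>x. (\<lambda>n. \<phi> n x) \<longlonglongrightarrow> indicator K x"
    "\<And>n. continuous_on UNIV (\<phi> n)"
proof -
  obtain \<delta> where d: "\<delta> > 0" "(\<Union>x\<in>K. cball x \<delta>) \<subseteq> X"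
    using compact_subset_open_imp_cball_epsilon_subset[OF K(1) X K(2)] by blast
  define \<phi> where "\<phi> n x = max 0 (1 - (real n + 1) / \<delta> * infdist x K)" for n x
  have cont: "continuous_on UNIV (\<phi> n)" for n
    unfolding \<phi>_def by (intro continuous_intros)
  have nn: "0 \<le> \<phi> n x" for n x unfolding \<phi>_def by simp
  have le1: "\<phi> n x \<le> 1" for n x unfolding \<phi>_def using infdist_nonneg[of x K] d(1)
    by (simp add: zero_le_divide_iff)
  have mono: "\<phi> (Suc n) x \<le> \<phi> n x" for n x
  proof -
    have "(real n + 1) / \<delta> * infdist x K \<le> (real (Suc n) + 1) / \<delta> * infdist x K"
      using infdist_nonneg[of x K] d(1) by (intro mult_right_mono divide_right_mono) auto
    then show ?thesis unfolding \<phi>_def by simp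
  qed
  have lim: "(\<lambda>n. \<phi> n x) \<longlonglongrightarrow> indicator K x" for x
  proof (cases "x \<in> K")
    case True
    then show ?thesis unfolding \<phi>_def by simp
  next
    case False
    have pos: "infdist x K > 0"
      using infdist_pos_not_in_closed[OF compact_imp_closed[OF K(1)] K(3) False] .
    obtain N :: nat where N: "\<delta> / infdist x K < real N" using reals_Archimedean2 by blast
    have "\<phi> n x = 0" if "n \<ge> N" for n
    proof -
      have "\<delta> / infdist x K < real n + 1" using N that by linarith
      then have "\<delta> < (real n + 1) * infdist x K" using pos by (simp add: divide_less_eq)
      then have "1 \<le> (real n + 1) / \<delta> * infdist x K" using d(1) by (simp add: field_simps)
      then show ?thesis unfolding \<phi>_def by simp
    qed
    then have "eventually (\<lambda>n. \<phi> n x = 0) sequentially"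
      unfolding eventually_sequentially by blast
    then show ?thesis using False by (simp add: tendsto_eventually)
  qed
  have sub: "{x. infdist x K \<le> \<delta>} \<subseteq> X"
  proof
    fix x assume "x \<in> {x. infdist x K \<le> \<delta>}"
    then have "infdist x K \<le> \<delta>" by simp
    moreover obtain a where "a \<in> K" "infdist x K = dist x a"
      using infdist_attains_inf[OF compact_imp_closed[OF K(1)] K(3)] by blast
    ultimately have "x \<in> cball a \<delta>" by (simp add: dist_commute)
    then show "x \<in> X" using d(2) \<open>a \<in> K\<close> by blast
  qed
  have C0: "C0 X (\<phi> n)" for n
    unfolding C0_def
  proof safe
    show "continuous_on X (\<phi> n)" using cont continuous_on_subset by blast
    fix e :: real assume e: "e > 0"
    have "{x \<in> X. e \<le> \<bar>\<phi> n x\<bar>} = {x. e \<le> \<bar>\<phi> n x\<bar>} \<inter> {x. infdist x K \<le> \<delta>}"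
    proof -
      have "infdist x K \<le> \<delta>" if "e \<le> \<bar>\<phi> n x\<bar>" for x
      proof (rule ccontr)
        assume "\<not> infdist x K \<le> \<delta>"
        then have "\<delta> \<le> 1 * infdist x K" by simp
        also have "\<dots> \<le> (real n + 1) * infdist x K"
          by (rule mult_right_mono) (auto simp: infdist_nonneg)
        finally have "\<delta> \<le> (real n + 1) * infdist x K" .
        then have "1 \<le> (real n + 1) / \<delta> * infdist x K" using d(1) by (simp add: field_simps)
        then have "\<phi> n x = 0" unfolding \<phi>_def by simp
        then show False using that e by simp
      qed
      then show ?thesis using sub by blast
    qed
    moreover have "compact ({x. e \<le> \<bar>\<phi> n x\<bar>} \<inter> {x. infdist x K \<le> \<delta>})"
      by (intro closed_Int_compact closed_Collect_le compact_infdist_le K d continuous_intros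
          continuous_on_subset[OF cont]) auto
    ultimately show "compact {x \<in> X. e \<le> \<bar>\<phi> n x\<bar>}" by simp
  qed
  show ?thesis using that[OF C0 nn le1 mono lim cont] .
qed




lemma meas_cont:
  assumes "continuous_on UNIV f" "sets M = sets (borelX X)"
  shows "(f :: 'a::euclidean_space \<Rightarrow> real) \<in> borel_measurable M"
proof -
  have "f \<in> borel_measurable (borelX X)"
    unfolding borelX_def by (rule measurable_restrict_space1) (rule borel_measurable_continuous_onI[OF assms(1)])
  then show ?thesis using measurable_cong_sets[OF assms(2) refl] by blast
qed

lemma lim_test:
  fixes \<phi> :: "nat \<Rightarrow> 'a::euclidean_space \<Rightarrow> real"
  assumes fin: "finite_measure M" and sM: "sets M = sets (borelX X)" and KX: "K \<subseteq> X" and Kc: "compact K"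
    and cont: "\<And>n. continuous_on UNIV (\<phi> n)" and nn: "\<And>n x. 0 \<le> \<phi> n x" and le1: "\<And>n x. \<phi> n x \<le> 1"
    and lim: "\<And>x. (\<lambda>n. \<phi> n x) \<longlonglongrightarrow> indicator K x"
  shows "(\<lambda>n. integral\<^sup>L M (\<phi> n)) \<longlonglongrightarrow> measure M K"
proof -
  interpret finite_measure M by fact
  have sp: "space M = X" using sets_eq_imp_space_eq[OF sM] by simp
  have Ks: "K \<in> sets M"
  proof -
    have "K \<in> sets borel" using Kc by (simp add: borel_compact)
    then have "K \<in> sets (borelX X)" unfolding borelX_def using KX
      by (auto simp: sets_restrict_space)
    then show ?thesis using sM by simp
  qed
  have "(\<lambda>n. integral\<^sup>L M (\<phi> n)) \<longlonglongrightarrow> integral\<^sup>L M (indicator K)"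
    by (rule integral_dominated_convergence[where w="\<lambda>_. 1"])
      (use meas_cont[OF cont sM] nn le1 lim Ks in auto)
  moreover have "integral\<^sup>L M (indicator K :: _ \<Rightarrow> real) = measure M K"
    using KX sp by (simp add: Int_absorb2)
  ultimately show ?thesis by simp
qed




lemma Pmeas_D:
  assumes "\<nu> \<in> Pmeas X"
  shows "prob_space \<nu>" "sets \<nu> = sets (borelX X)" "space \<nu> = X"
proof -
  show "prob_space \<nu>" "sets \<nu> = sets (borelX X)" using assms unfolding Pmeas_def by auto
  then show "space \<nu> = X" using sets_eq_imp_space_eq[of \<nu> "borelX X"] by simp
qed

lemma Fop_prob:
  assumes K: "stoch_kernel X \<kappa>" and nu: "\<nu> \<in> Pmeas X"
  shows "prob_space (Fop X \<kappa> \<nu>)" "sets (Fop X \<kappa> \<nu>) = sets (borelX X)" "space (Fop X \<kappa> \<nu>) = X"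
proof -
  show sF: "sets (Fop X \<kappa> \<nu>) = sets (borelX X)" by (rule sets_Fop)
  show spF: "space (Fop X \<kappa> \<nu>) = X" using sets_eq_imp_space_eq[OF sF] by simp
  interpret prob_space \<nu> using Pmeas_D[OF nu] by simp
  have "emeasure (Fop X \<kappa> \<nu>) X = (\<integral>\<^sup>+x. \<integral>\<^sup>+y. emeasure (\<kappa> x y) X \<partial>\<nu> \<partial>\<nu>)"
    by (rule Fop_emeasure[OF K Pmeas_D(2)[OF nu] finite_measure_axioms])
       (metis sets.top space_borelX)
  also have "\<dots> = (\<integral>\<^sup>+x. \<integral>\<^sup>+y. 1 \<partial>\<nu> \<partial>\<nu>)"
  proof (intro nn_integral_cong)
    fix x y assume "x \<in> space \<nu>" "y \<in> space \<nu>"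
    then have "x \<in> X" "y \<in> X" using Pmeas_D(3)[OF nu] by auto
    then show "emeasure (\<kappa> x y) X = 1"
      using kprob[OF K] prob_space.emeasure_space_1 by metis
  qed
  also have "\<dots> = 1" by (simp add: emeasure_space_1)
  finally show "prob_space (Fop X \<kappa> \<nu>)" by (intro prob_spaceI) (simp add: spF)
qed

lemma duhamel:
  fixes X :: "'a::euclidean_space set" and G g :: "real \<Rightarrow> real"
  assumes X: "open X" and Kk: "stoch_kernel X \<kappa>" and sol: "is_solution X \<kappa> \<mu>"
    and t: "0 \<le> t" and K: "compact K" "K \<subseteq> X"
    and G: "\<And>r. (G has_real_derivative g r) (at r)"
    and bnd: "\<And>r. r \<in> {0..t} \<Longrightarrow> exp r * measure (Fop X \<kappa> (\<mu> r)) K \<le> g r"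
  shows "exp t * measure (\<mu> t) K \<le> measure (\<mu> 0) K + (G t - G 0)"
proof -
  have Gc: "continuous_on {0..t} G"
    by (rule continuous_at_imp_continuous_on) (use G DERIV_isCont in blast)
  have gint: "(g has_integral (G t - G 0)) {0..t}"
    by (rule fundamental_theorem_of_calculus_interior[OF t Gc])
       (use G in \<open>auto simp: has_real_derivative_iff_has_vector_derivative[symmetric]\<close>)
  have gnn: "0 \<le> g r" if "r \<in> {0..t}" for r
    using bnd[OF that] by (smt (verit) exp_gt_zero measure_nonneg mult_nonneg_nonneg)
  show ?thesis
  proof (cases "K = {}")
    case True
    have "0 \<le> G t - G 0" using has_integral_nonneg[OF gint gnn] by simp
    then show ?thesis using True by simp
  next
    case Kne: False
    obtain \<phi> :: "nat \<Rightarrow> 'a \<Rightarrow> real" where phi: "\<And>n. C0 X (\<phi> n)" "\<And>n x. 0 \<le> \<phi> n x" "\<And>n x. \<phi> n x \<le> 1"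
      "\<And>n x. \<phi> (Suc n) x \<le> \<phi> n x" "\<And>x. (\<lambda>n. \<phi> n x) \<longlonglongrightarrow> indicator K x"
      "\<And>n. continuous_on UNIV (\<phi> n)"
      using test_fun[OF X K Kne] by blast
    have Pm: "\<mu> r \<in> Pmeas X" if "r \<ge> 0" for r using sol that unfolding is_solution_def by blast
    have FP: "prob_space (Fop X \<kappa> (\<mu> r))" "sets (Fop X \<kappa> (\<mu> r)) = sets (borelX X)" if "r \<ge> 0" for r
      using Fop_prob[OF Kk Pm[OF that]] by auto
    define m where "m n r = integral\<^sup>L (\<mu> r) (\<phi> n)" for n r
    define Fp where "Fp n r = integral\<^sup>L (Fop X \<kappa> (\<mu> r)) (\<phi> n)" for n r
    have dif: "\<And>r. r \<ge> 0 \<Longrightarrow> (m n) differentiable (at r within {0..})"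
      and der: "\<And>r. r > 0 \<Longrightarrow> (m n has_real_derivative (Fp n r - m n r)) (at r)" for n
      using sol phi(1)[of n] unfolding is_solution_def m_def Fp_def by blast+
    have cm: "continuous_on {0..t} (m n)" for n
    proof -
      have "continuous (at r within {0..t}) (m n)" if "r \<in> {0..t}" for r
        using differentiable_imp_continuous_within[OF dif[of r n]] that
        by (auto intro: continuous_within_subset)
      then show ?thesis by (simp add: continuous_on_eq_continuous_within)
    qed
    have hint: "((\<lambda>r. exp r * Fp n r) has_integral (exp t * m n t - exp 0 * m n 0)) {0..t}" for n
    proof (rule fundamental_theorem_of_calculus_interior[OF t])
      show "continuous_on {0..t} (\<lambda>r. exp r * m n r)"
        by (intro continuous_intros cm)
      fix r assume r: "r \<in> {0<..<t}"
      have "((\<lambda>r. exp r * m n r) has_real_derivative (exp r * m n r + exp r * (Fp n r - m n r))) (at r)"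
        using r by (auto intro!: derivative_eq_intros der)
      then show "((\<lambda>r. exp r * m n r) has_vector_derivative exp r * Fp n r) (at r)"
        by (simp add: has_real_derivative_iff_has_vector_derivative[symmetric] algebra_simps)
    qed
    have intgr: "integrable M (\<phi> n)" if "finite_measure M" "sets M = sets (borelX X)" for M n
    proof -
      interpret finite_measure M by fact
      show ?thesis
        by (rule integrable_const_bound[where B=1]) (use phi(2,3) meas_cont[OF phi(6) that(2)] in auto)
    qed
    have mc: "(\<lambda>r. exp r * measure (Fop X \<kappa> (\<mu> r)) K) integrable_on {0..t} \<and>
        (\<lambda>k. integral {0..t} (\<lambda>r. exp r * Fp k r)) \<longlonglongrightarrow> integral {0..t} (\<lambda>r. exp r * measure (Fop X \<kappa> (\<mu> r)) K)"
    proof (rule monotone_convergence_decreasing)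
      fix k
      show "(\<lambda>r. exp r * Fp k r) integrable_on {0..t}" using hint[of k] by blast
      fix r :: real assume r: "r \<in> {0..t}"
      then have r0: "r \<ge> 0" by simp
      have fmF: "finite_measure (Fop X \<kappa> (\<mu> r))" using FP(1)[OF r0] by (simp add: prob_space_def)
      show "exp r * Fp (Suc k) r \<le> exp r * Fp k r" unfolding Fp_def
        by (intro mult_left_mono integral_mono intgr[OF fmF FP(2)[OF r0]] phi(4)) auto
    next
      fix r :: real assume r: "r \<in> {0..t}"
      then have r0: "r \<ge> 0" by simp
      have fmF: "finite_measure (Fop X \<kappa> (\<mu> r))" using FP(1)[OF r0] by (simp add: prob_space_def)
      show "(\<lambda>k. exp r * Fp k r) \<longlonglongrightarrow> exp r * measure (Fop X \<kappa> (\<mu> r)) K"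
        unfolding Fp_def
        by (intro tendsto_mult_left lim_test[OF fmF FP(2)[OF r0] K(2) K(1)] phi)
    next
      have mb: "0 \<le> m k r \<and> m k r \<le> 1" if "r \<ge> 0" for k r
      proof -
        interpret prob_space "\<mu> r" using Pm[OF that] Pmeas_D by blast
        have sr: "sets (\<mu> r) = sets (borelX X)" using Pm[OF that] Pmeas_D by blast
        have "m k r \<le> integral\<^sup>L (\<mu> r) (\<lambda>_. 1::real)" unfolding m_def
          by (intro integral_mono intgr[OF finite_measure_axioms sr] phi) auto
        moreover have "0 \<le> m k r" unfolding m_def by (intro integral_nonneg_AE) (auto intro: phi)
        ultimately show ?thesis by (simp add: prob_space)
      qed
      show "bounded (range (\<lambda>k. integral {0..t} (\<lambda>r. exp r * Fp k r)))"
        unfolding bounded_iff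
      proof (intro exI ballI)
        fix y assume "y \<in> range (\<lambda>k. integral {0..t} (\<lambda>r. exp r * Fp k r))"
        then obtain k where y: "y = exp t * m k t - exp 0 * m k 0" using hint by (auto simp: integral_unique)
        have "0 \<le> m k t" "m k t \<le> 1" "0 \<le> m k 0" "m k 0 \<le> 1" using mb t by auto
        moreover have "exp t * m k t \<le> exp t" using \<open>m k t \<le> 1\<close> by simp
        moreover have "0 \<le> exp t * m k t" using \<open>0 \<le> m k t\<close> by simp
        ultimately show "norm y \<le> exp t + 1" unfolding y real_norm_def exp_zero mult_1
          by (intro abs_leI) linarith+
      qed
    qed
    have "(\<lambda>k. integral {0..t} (\<lambda>r. exp r * Fp k r)) \<longlonglongrightarrow> exp t * measure (\<mu> t) K - exp 0 * measure (\<mu> 0) K"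
    proof -
      have fm: "finite_measure (\<mu> r)" "sets (\<mu> r) = sets (borelX X)" if "r \<ge> 0" for r
        using Pmeas_D(1,2)[OF Pm[OF that]] by (auto simp: prob_space_def)
      have "(\<lambda>k. exp t * m k t - exp 0 * m k 0) \<longlonglongrightarrow> exp t * measure (\<mu> t) K - exp 0 * measure (\<mu> 0) K"
        unfolding m_def using t
        by (intro tendsto_diff tendsto_mult_left lim_test[OF fm K(2) K(1)] phi) auto
      moreover have "integral {0..t} (\<lambda>r. exp r * Fp k r) = exp t * m k t - exp 0 * m k 0" for k
        using hint[of k] by (rule integral_unique)
      ultimately show ?thesis by simp
    qed
    then have "integral {0..t} (\<lambda>r. exp r * measure (Fop X \<kappa> (\<mu> r)) K) = exp t * measure (\<mu> t) K - measure (\<mu> 0) K"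
      using LIMSEQ_unique[OF conjunct2[OF mc]] by simp
    moreover have "integral {0..t} (\<lambda>r. exp r * measure (Fop X \<kappa> (\<mu> r)) K) \<le> integral {0..t} g"
      by (rule integral_le[OF conjunct1[OF mc] has_integral_integrable[OF gint] bnd])
    ultimately show ?thesis using gint by (simp add: integral_unique)
  qed
qed




lemma sets_lebX: "sets (lebX X) = sets (borelX X)"
  unfolding lebX_def borelX_def by (simp add: sets_restrict_space)

lemma space_lebX[simp]: "space (lebX X) = X"
  unfolding lebX_def by (simp add: space_restrict_space)

lemma sigma_finite_lebX: "open X \<Longrightarrow> sigma_finite_measure (lebX X)"
  unfolding lebX_def
  by (rule sigma_finite_measure_restrict_space) (auto simp: lborel.sigma_finite_measure_axioms)

lemma compact_in_borelX: "compact K \<Longrightarrow> K \<subseteq> X \<Longrightarrow> K \<in> sets (borelX X)"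
  unfolding borelX_def by (auto simp: sets_restrict_space borel_compact)

lemma inner_reg:
  fixes X :: "'a::euclidean_space set"
  assumes X: "open X" and fin: "finite_measure M" and sM: "sets M = sets (borelX X)" and A: "A \<in> sets M"
  shows "emeasure M A = (SUP K \<in> {K. K \<subseteq> A \<and> compact K}. emeasure M K)"
proof -
  interpret finite_measure M by fact
  have sp: "space M = X" using sets_eq_imp_space_eq[OF sM] by simp
  have idm: "(\<lambda>x. x) \<in> measurable M borel"
  proof -
    have "(\<lambda>x. x) \<in> measurable (borelX X) borel"
      unfolding borelX_def by (rule measurable_restrict_space1) simp
    then show ?thesis using measurable_cong_sets[OF sM refl] by blast
  qed
  define M' where "M' = distr M borel (\<lambda>x. x)"
  have sM': "sets M' = sets borel" unfolding M'_def by simp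
  have em: "emeasure M' B = emeasure M (B \<inter> X)" if "B \<in> sets borel" for B
    unfolding M'_def using emeasure_distr[OF idm, of B] that sp by simp
  have fin': "emeasure M' (space M') \<noteq> \<infinity>"
    using em[of UNIV] unfolding M'_def by simp
  have AX: "A \<subseteq> X" using sets.sets_into_space[OF A] sp by simp
  have Ab: "A \<in> sets borel"
  proof -
    have "A \<in> sets (restrict_space borel X)" using A sM unfolding borelX_def by simp
    then show ?thesis using X by (subst (asm) sets_restrict_space_iff) auto
  qed
  have "emeasure M A = emeasure M' A" using em[OF Ab] AX by (simp add: Int_absorb2)
  also have "\<dots> = (SUP K \<in> {K. K \<subseteq> A \<and> compact K}. emeasure M' K)"
    by (rule inner_regular[OF sM' fin' Ab])
  also have "\<dots> = (SUP K \<in> {K. K \<subseteq> A \<and> compact K}. emeasure M K)"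
  proof (rule SUP_cong[OF refl])
    fix K assume "K \<in> {K. K \<subseteq> A \<and> compact K}"
    then show "emeasure M' K = emeasure M K" using em[of K] AX
      by (auto simp: borel_compact Int_absorb2)
  qed
  finally show ?thesis .
qed

lemma max_null:
  fixes X :: "'a::euclidean_space set"
  assumes fin: "finite_measure M" and sM: "sets M = sets (borelX X)"
  shows "\<exists>U \<in> null_sets (lebX X). \<forall>N \<in> null_sets (lebX X). emeasure M (N - U) = 0"
proof -
  interpret finite_measure M by fact
  let ?L = "lebX X"
  have sL: "sets ?L = sets M" using sM sets_lebX by metis
  define s where "s = (SUP N \<in> null_sets ?L. measure M N)"
  have bdd: "bdd_above ((\<lambda>N. measure M N) ` null_sets ?L)"
    by (rule bdd_aboveI[where M="measure M (space M)"]) (auto intro: bounded_measure)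
  have ne: "null_sets ?L \<noteq> {}" by auto
  have "\<exists>N \<in> null_sets ?L. s - 1 / (real n + 1) < measure M N" for n
  proof -
    have "s - 1 / (real n + 1) < s" by simp
    then show ?thesis unfolding s_def by (subst (asm) less_cSUP_iff[OF ne bdd]) auto
  qed
  then obtain Nn where Nn: "\<And>n. Nn n \<in> null_sets ?L" "\<And>n. s - 1 / (real n + 1) < measure M (Nn n)"
    by metis
  define U where "U = (\<Union>n. Nn n)"
  have U: "U \<in> null_sets ?L" unfolding U_def using Nn(1) by (intro null_sets_UN) auto
  have UM: "U \<in> sets M" using U sL by (auto simp: null_sets_def)
  have Ub: "s - 1 / (real n + 1) < measure M U" for n
  proof -
    have "measure M (Nn n) \<le> measure M U"
      using Nn(1)[of n] UM sL unfolding U_def by (intro finite_measure_mono) (auto simp: null_sets_def)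
    then show ?thesis using Nn(2)[of n] by simp
  qed
  show ?thesis
  proof (intro bexI[OF _ U] ballI)
    fix N assume N: "N \<in> null_sets ?L"
    have NM: "N \<in> sets M" using N sL by (auto simp: null_sets_def)
    have NU: "N \<union> U \<in> null_sets ?L" using N U by auto
    have "measure M (N \<union> U) \<le> s" unfolding s_def by (rule cSUP_upper[OF NU bdd])
    moreover have "measure M (N \<union> U) = measure M (N - U) + measure M U"
    proof -
      have "N \<union> U = (N - U) \<union> U" by auto
      moreover have "measure M ((N - U) \<union> U) = measure M (N - U) + measure M U"
        using NM UM by (intro finite_measure_Union) auto
      ultimately show ?thesis by simp
    qed
    ultimately have "measure M (N - U) < 1 / (real n + 1)" for n using Ub[of n] by linarith
    then have "measure M (N - U) \<le> 0"
    proof -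
      have "(\<lambda>n. 1 / (real n + 1)) \<longlonglongrightarrow> 0" using LIMSEQ_inverse_real_of_nat_add[of 0] by (simp add: inverse_eq_divide add.commute)
      moreover have "\<forall>i. measure M (N - U) \<le> 1 / (real i + 1)"
        using \<open>\<And>n. measure M (N - U) < 1 / (real n + 1)\<close> less_imp_le by blast
      then have "eventually (\<lambda>i. measure M (N - U) \<le> 1 / (real i + 1)) sequentially"
        by (rule always_eventually)
      ultimately show ?thesis using tendsto_lowerbound by fastforce
    qed
    then have "measure M (N - U) = 0" by (simp add: measure_nonneg antisym)
    then show "emeasure M (N - U) = 0" using NM UM by (simp add: emeasure_eq_measure)
  qed
qed




lemma F_null_bound:
  fixes X :: "'a::euclidean_space set"
  assumes Kk: "stoch_kernel X \<kappa>" and Pm: "M \<in> Pmeas X"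
    and H1: "\<forall>\<nu>\<in>Mplus X. absolutely_continuous (lebX X) \<nu> \<longrightarrow> (\<forall>x\<in>X. absolutely_continuous (lebX X) (kappa2 X \<kappa> \<nu> x))"
    and U: "U \<in> null_sets (lebX X)" "\<forall>N\<in>null_sets (lebX X). emeasure M (N - U) = 0"
    and K: "K \<in> null_sets (lebX X)"
  shows "emeasure (Fop X \<kappa> M) K \<le> emeasure M U"
proof -
  interpret prob_space M using Pmeas_D[OF Pm] by blast
  have sM: "sets M = sets (borelX X)" and spM: "space M = X" using Pmeas_D[OF Pm] by auto
  have sL: "sets (lebX X) = sets (borelX X)" by (rule sets_lebX)
  have UM: "U \<in> sets M" using U(1) sL sM by (auto simp: null_sets_def)
  have KB: "K \<in> sets (borelX X)" using K sL by (auto simp: null_sets_def)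
  define \<nu> where "\<nu> = density M (indicator (X - U))"
  have snu: "sets \<nu> = sets (borelX X)" unfolding \<nu>_def using sM by simp
  have XU: "X - U \<in> sets M" using UM spM by (metis sets.compl_sets)
  have emnu: "emeasure \<nu> N = emeasure M (N - U)" if "N \<in> sets M" for N
  proof -
    have NX: "N \<subseteq> X" using sets.sets_into_space[OF that] spM by simp
    have "emeasure \<nu> N = (\<integral>\<^sup>+x. indicator (X - U) x * indicator N x \<partial>M)"
      unfolding \<nu>_def using that XU by (simp add: emeasure_density)
    also have "\<dots> = (\<integral>\<^sup>+x. indicator (N - U) x \<partial>M)"
      by (rule nn_integral_cong) (use NX in \<open>auto simp: indicator_def\<close>)
    also have "\<dots> = emeasure M (N - U)" using that UM by simp
    finally show ?thesis .
  qed
  have finnu: "finite_measure \<nu>"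
  proof (rule finite_measureI)
    have "space \<nu> = X" unfolding \<nu>_def using spM by simp
    then have "emeasure \<nu> (space \<nu>) = emeasure M (X - U)" using emnu[of X] spM sets.top[of M] by simp
    also have "\<dots> \<le> emeasure M (space M)" using XU spM by (intro emeasure_mono) auto
    finally show "emeasure \<nu> (space \<nu>) \<noteq> \<infinity>" using emeasure_space_1 by (auto simp: top_unique)
  qed
  have ac: "absolutely_continuous (lebX X) \<nu>"
    unfolding absolutely_continuous_def
  proof
    fix N assume N: "N \<in> null_sets (lebX X)"
    then have NM: "N \<in> sets M" using sL sM by (auto simp: null_sets_def)
    then show "N \<in> null_sets \<nu>" using emnu[OF NM] U(2) N snu sM by (auto simp: null_sets_def)
  qed
  have nuM: "\<nu> \<in> Mplus X" unfolding Mplus_def using finnu snu by simp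
  have ack: "absolutely_continuous (lebX X) (kappa2 X \<kappa> \<nu> x)" if "x \<in> X" for x
    using H1 nuM ac that by blast
  have inner: "(\<integral>\<^sup>+y. emeasure (\<kappa> x y) K \<partial>M) \<le> emeasure M U" if x: "x \<in> X" for x
  proof -
    have m: "(\<lambda>y. emeasure (\<kappa> x y) K) \<in> borel_measurable M" by (rule kmeas2[OF Kk KB sM x])
    have "(\<integral>\<^sup>+y. emeasure (\<kappa> x y) K \<partial>M) =
        (\<integral>\<^sup>+y. indicator (X - U) y * emeasure (\<kappa> x y) K + indicator U y * emeasure (\<kappa> x y) K \<partial>M)"
      by (rule nn_integral_cong) (auto simp: indicator_def spM)
    also have "\<dots> = (\<integral>\<^sup>+y. indicator (X - U) y * emeasure (\<kappa> x y) K \<partial>M) +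
        (\<integral>\<^sup>+y. indicator U y * emeasure (\<kappa> x y) K \<partial>M)"
      by (rule nn_integral_add) (use m XU UM in auto)
    also have "(\<integral>\<^sup>+y. indicator (X - U) y * emeasure (\<kappa> x y) K \<partial>M) = (\<integral>\<^sup>+y. emeasure (\<kappa> x y) K \<partial>\<nu>)"
      unfolding \<nu>_def
      by (rule nn_integral_density[symmetric]) (use m XU in auto)
    also have "\<dots> = emeasure (kappa2 X \<kappa> \<nu> x) K"
      by (rule kappa2_emeasure[symmetric, OF Kk snu x KB])
    also have "\<dots> = 0"
    proof -
      have "K \<in> null_sets (kappa2 X \<kappa> \<nu> x)" using ack[OF x] K unfolding absolutely_continuous_def by blast
      then show ?thesis by auto
    qed
    also have "(\<integral>\<^sup>+y. indicator U y * emeasure (\<kappa> x y) K \<partial>M) \<le> (\<integral>\<^sup>+y. indicator U y \<partial>M)"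
    proof (rule nn_integral_mono)
      fix y assume "y \<in> space M"
      then have y: "y \<in> X" using spM by simp
      have "emeasure (\<kappa> x y) K \<le> 1"
        using prob_space.emeasure_le_1[OF kprob(1)[OF Kk x y]] by simp
      then show "indicator U y * emeasure (\<kappa> x y) K \<le> indicator U y"
        by (simp add: indicator_def)
    qed
    also have "\<dots> = emeasure M U" using UM by simp
    finally show ?thesis by simp
  qed
  have "emeasure (Fop X \<kappa> M) K = (\<integral>\<^sup>+x. \<integral>\<^sup>+y. emeasure (\<kappa> x y) K \<partial>M \<partial>M)"
    by (rule Fop_emeasure[OF Kk sM finite_measure_axioms KB])
  also have "\<dots> \<le> (\<integral>\<^sup>+x. emeasure M U \<partial>M)"
    by (rule nn_integral_mono) (use inner spM in auto)
  also have "\<dots> = emeasure M U" by (simp add: emeasure_space_1)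
  finally show ?thesis .
qed




lemma part1:
  fixes X :: "'a::euclidean_space set"
  assumes X: "open X" and Kk: "stoch_kernel X \<kappa>" and sol: "is_solution X \<kappa> \<mu>"
    and ac0: "absolutely_continuous (lebX X) (\<mu> 0)"
    and H1: "\<forall>\<nu>\<in>Mplus X. absolutely_continuous (lebX X) \<nu> \<longrightarrow> (\<forall>x\<in>X. absolutely_continuous (lebX X) (kappa2 X \<kappa> \<nu> x))"
  shows "\<forall>t\<ge>0. absolutely_continuous (lebX X) (\<mu> t)"
proof (intro allI impI)
  fix t :: real assume t: "0 \<le> t"
  let ?L = "lebX X"
  have sL: "sets ?L = sets (borelX X)" by (rule sets_lebX)
  have Pm: "\<mu> r \<in> Pmeas X" if "r \<ge> 0" for r using sol that unfolding is_solution_def by blast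
  have ps: "prob_space (\<mu> r)" and sr: "sets (\<mu> r) = sets (borelX X)" if "r \<ge> 0" for r
    using Pmeas_D[OF Pm[OF that]] by auto
  have fmr: "finite_measure (\<mu> r)" if "r \<ge> 0" for r using ps[OF that] by (simp add: prob_space_def)
  define val where "val p = measure (\<mu> (fst p)) (snd p)" for p
  define A where "A = {0..t} \<times> null_sets ?L"
  define S where "S = (SUP p\<in>A. val p)"
  have bdd: "bdd_above (val ` A)"
    by (rule bdd_aboveI[where M=1]) (auto simp: A_def val_def intro: prob_space.prob_le_1[OF ps])
  have Ane: "A \<noteq> {}" unfolding A_def using t by auto
  have S0: "0 \<le> S"
  proof -
    have "(0, {}) \<in> A" unfolding A_def using t by auto
    then have "val (0, {}) \<le> S" unfolding S_def by (rule cSUP_upper[OF _ bdd])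
    then show ?thesis by (simp add: val_def)
  qed
  have "\<forall>r\<in>{0..t}. \<exists>U \<in> null_sets ?L. \<forall>N \<in> null_sets ?L. emeasure (\<mu> r) (N - U) = 0"
  proof
    fix r :: real assume "r \<in> {0..t}"
    then have r0: "r \<ge> 0" by simp
    show "\<exists>U \<in> null_sets ?L. \<forall>N \<in> null_sets ?L. emeasure (\<mu> r) (N - U) = 0"
      by (rule max_null[OF _ sr[OF r0]]) (use ps[OF r0] in \<open>simp add: prob_space_def\<close>)
  qed
  then obtain U where U: "\<And>r. r \<in> {0..t} \<Longrightarrow> U r \<in> null_sets ?L"
    "\<And>r. r \<in> {0..t} \<Longrightarrow> \<forall>N \<in> null_sets ?L. emeasure (\<mu> r) (N - U r) = 0"
    by metis
  have Fb: "measure (Fop X \<kappa> (\<mu> r)) K \<le> S" if r: "r \<in> {0..t}" and K: "K \<in> null_sets ?L" for r K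
  proof -
    have r0: "r \<ge> 0" using r by simp
    have "emeasure (Fop X \<kappa> (\<mu> r)) K \<le> emeasure (\<mu> r) (U r)"
      by (rule F_null_bound[OF Kk Pm[OF r0] H1 U(1)[OF r] U(2)[OF r] K])
    then have "measure (Fop X \<kappa> (\<mu> r)) K \<le> measure (\<mu> r) (U r)"
      using prob_space.emeasure_le_1[OF ps[OF r0], of "U r"]
      unfolding measure_def by (metis enn2real_mono ennreal_one_less_top le_less_trans)
    also have "\<dots> = val (r, U r)" by (simp add: val_def)
    also have "\<dots> \<le> S" unfolding S_def by (rule cSUP_upper[OF _ bdd]) (use r U(1)[OF r] in \<open>auto simp: A_def\<close>)
    finally show ?thesis .
  qed
  have claim: "measure (\<mu> r) N \<le> (1 - exp (- r)) * S" if r: "r \<in> {0..t}" and N: "N \<in> null_sets ?L" for r N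
  proof -
    have r0: "r \<ge> 0" using r by simp
    have NX: "N \<subseteq> X" using sets.sets_into_space[of N ?L] N by (auto simp: null_sets_def)
    have NM: "N \<in> sets (\<mu> r)" using N sL sr[OF r0] by (auto simp: null_sets_def)
    have Kb: "measure (\<mu> r) K \<le> (1 - exp (- r)) * S" if K: "K \<subseteq> N" "compact K" for K
    proof -
      have KX: "K \<subseteq> X" using K NX by auto
      have KL: "K \<in> null_sets ?L"
        by (rule null_sets_subset[OF N _ K(1)]) (use compact_in_borelX[OF K(2) KX] sL in simp)
      have "exp r * measure (\<mu> r) K \<le> measure (\<mu> 0) K + (S * exp r - S * exp 0)"
      proof (rule duhamel[OF X Kk sol r0 K(2) KX])
        show "((\<lambda>r. S * exp r) has_real_derivative S * exp r') (at r')" for r'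
          by (auto intro!: derivative_eq_intros)
        fix r' assume "r' \<in> {0..r}"
        then have "r' \<in> {0..t}" using r by auto
        then show "exp r' * measure (Fop X \<kappa> (\<mu> r')) K \<le> S * exp r'"
          using Fb[OF _ KL] by (simp add: mult.commute)
      qed
      moreover have "measure (\<mu> 0) K = 0"
      proof -
        have "K \<in> null_sets (\<mu> 0)" using ac0 KL unfolding absolutely_continuous_def by blast
        then show ?thesis by (simp add: measure_def null_setsD1)
      qed
      ultimately have "exp r * measure (\<mu> r) K \<le> exp r * ((1 - exp (- r)) * S)"
        by (simp add: algebra_simps exp_minus)
      then show ?thesis by simp
    qed
    have "emeasure (\<mu> r) N = (SUP K \<in> {K. K \<subseteq> N \<and> compact K}. emeasure (\<mu> r) K)"
      by (rule inner_reg[OF X _ sr[OF r0] NM]) (use ps[OF r0] in \<open>simp add: prob_space_def\<close>)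
    also have "\<dots> \<le> ennreal ((1 - exp (- r)) * S)"
    proof (rule SUP_least)
      fix K assume "K \<in> {K. K \<subseteq> N \<and> compact K}"
      then show "emeasure (\<mu> r) K \<le> ennreal ((1 - exp (- r)) * S)"
        using Kb finite_measure.emeasure_eq_measure[OF fmr[OF r0]] by (auto intro: ennreal_leI)
    qed
    finally have E: "emeasure (\<mu> r) N \<le> ennreal ((1 - exp (- r)) * S)" .
    have nn: "0 \<le> (1 - exp (- r)) * S" using r0 S0 by simp
    show ?thesis using E finite_measure.emeasure_eq_measure[OF fmr[OF r0], of N] nn
      by (simp add: ennreal_le_iff)
  qed
  have "S \<le> (1 - exp (- t)) * S" unfolding S_def
  proof (rule cSUP_least[OF Ane])
    fix p assume "p \<in> A"
    then obtain r N where p: "p = (r, N)" "r \<in> {0..t}" "N \<in> null_sets ?L" by (auto simp: A_def)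
    have "val p \<le> (1 - exp (- r)) * S" using claim[OF p(2,3)] p by (simp add: val_def)
    also have "\<dots> \<le> (1 - exp (- t)) * S" using p(2) S0 by (intro mult_right_mono) auto
    finally show "val p \<le> (1 - exp (- t)) * (SUP p\<in>A. val p)" unfolding S_def .
  qed
  then have "exp (- t) * S \<le> 0" by (simp add: algebra_simps)
  then have S00: "S = 0" using S0 by (simp add: mult_le_0_iff)
  show "absolutely_continuous ?L (\<mu> t)"
    unfolding absolutely_continuous_def
  proof
    fix N assume N: "N \<in> null_sets ?L"
    have NM: "N \<in> sets (\<mu> t)" using N sL sr[OF t] by (auto simp: null_sets_def)
    have "measure (\<mu> t) N \<le> 0" using claim[OF _ N, of t] t S00 by simp
    then have "measure (\<mu> t) N = 0" by (simp add: antisym)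
    then show "N \<in> null_sets (\<mu> t)"
      using NM finite_measure.emeasure_eq_measure[OF fmr[OF t]] by (simp add: null_sets_def)
  qed
qed




lemma dens_bound:
  fixes X :: "'a::euclidean_space set"
  assumes X: "open X" and ac: "absolutely_continuous (lebX X) M" and sM: "sets M = sets (borelX X)"
    and K: "K \<in> sets (borelX X)"
  shows "emeasure M K \<le> dens_sup X M * emeasure (lebX X) K"
proof -
  interpret sigma_finite_measure "lebX X" by (rule sigma_finite_lebX[OF X])
  have sML: "sets M = sets (lebX X)" using sM sets_lebX by metis
  have KL: "K \<in> sets (lebX X)" using K sets_lebX by metis
  define h where "h = RN_deriv (lebX X) M"
  have Md: "density (lebX X) h = M" unfolding h_def by (rule density_RN_deriv[OF ac sML])
  have hm: "h \<in> borel_measurable (lebX X)" unfolding h_def by simp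
  have "emeasure M K = (\<integral>\<^sup>+x. h x * indicator K x \<partial>lebX X)"
    using Md[symmetric] KL hm by (simp add: emeasure_density)
  also have "\<dots> \<le> (\<integral>\<^sup>+x. dens_sup X M * indicator K x \<partial>lebX X)"
  proof (rule nn_integral_mono_AE)
    show "AE x in lebX X. h x * indicator K x \<le> dens_sup X M * indicator K x"
      using esssup_AE[of h "lebX X"] unfolding dens_sup_def h_def
      by eventually_elim (auto simp: indicator_def)
  qed
  also have "\<dots> = dens_sup X M * emeasure (lebX X) K" by (rule nn_integral_cmult_indicator[OF KL])
  finally show ?thesis .
qed

lemma dens_sup_density:
  fixes X :: "'a::euclidean_space set"
  assumes X: "open X" and g: "g \<in> borel_measurable (lebX X)" and ae: "AE x in lebX X. g x \<le> c"
  shows "dens_sup X (density (lebX X) g) \<le> c"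
proof -
  interpret sigma_finite_measure "lebX X" by (rule sigma_finite_lebX[OF X])
  have "AE x in lebX X. g x = RN_deriv (lebX X) (density (lebX X) g) x"
    by (rule RN_deriv_unique[OF g refl])
  with ae have "AE x in lebX X. RN_deriv (lebX X) (density (lebX X) g) x \<le> c"
    by eventually_elim auto
  then show ?thesis unfolding dens_sup_def by (intro esssup_I) simp
qed

lemma ac_density: "g \<in> borel_measurable M \<Longrightarrow> absolutely_continuous M (density M g)"
  unfolding absolutely_continuous_def
proof
  fix N assume g: "g \<in> borel_measurable M" and N: "N \<in> null_sets M"
  have "emeasure (density M g) N = (\<integral>\<^sup>+x. g x * indicator N x \<partial>M)"
    using N g by (intro emeasure_density) (auto simp: null_sets_def)
  also have "\<dots> = 0" by (rule nn_integral_null_set[OF N])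
  finally show "N \<in> null_sets (density M g)" using N by (auto simp: null_sets_def)
qed




lemma ennreal_min_split: "min a b + (a - b) = (a::ennreal)"
proof (cases "a \<le> b")
  case True
  show ?thesis
  proof (cases "a = top")
    case True
    then show ?thesis by simp
  next
    case False
    then have "a - b = 0" using True by (simp add: diff_eq_0_iff_ennreal less_top)
    then show ?thesis using True by simp
  qed
next
  case False
  then show ?thesis by (simp add: min_def add_diff_inverse_ennreal)
qed

lemma Fbound:
  fixes X :: "'a::euclidean_space set"
  assumes X: "open X" and Kk: "stoch_kernel X \<kappa>" and Pm: "M \<in> Pmeas X"
    and acM: "absolutely_continuous (lebX X) M"
    and H1: "\<forall>\<nu>\<in>Mplus X. absolutely_continuous (lebX X) \<nu> \<longrightarrow> (\<forall>x\<in>X. absolutely_continuous (lebX X) (kappa2 X \<kappa> \<nu> x))"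
    and H2: "\<forall>\<nu>\<in>Mplus X. absolutely_continuous (lebX X) \<nu> \<longrightarrow> (\<forall>x\<in>X. dens_sup X (kappa2 X \<kappa> \<nu> x) \<le> ennreal C * dens_sup X \<nu>)"
    and l: "0 \<le> l" and K: "K \<in> sets (borelX X)"
  shows "emeasure (Fop X \<kappa> M) K \<le> ennreal C * ennreal l * emeasure (lebX X) K + (\<integral>\<^sup>+x. RN_deriv (lebX X) M x - ennreal l \<partial>lebX X)"
proof -
  interpret L: sigma_finite_measure "lebX X" by (rule sigma_finite_lebX[OF X])
  interpret prob_space M using Pmeas_D[OF Pm] by blast
  have sM: "sets M = sets (borelX X)" and spM: "space M = X" using Pmeas_D[OF Pm] by auto
  have sL: "sets (lebX X) = sets (borelX X)" by (rule sets_lebX)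
  have sML: "sets M = sets (lebX X)" using sM sL by simp
  define f where "f = RN_deriv (lebX X) M"
  have Md: "density (lebX X) f = M" unfolding f_def by (rule L.density_RN_deriv[OF acM sML])
  have fm: "f \<in> borel_measurable (lebX X)" unfolding f_def by simp
  define E where "E = (\<integral>\<^sup>+x. f x - ennreal l \<partial>lebX X)"
  define a where "a = density (lebX X) (\<lambda>y. min (f y) (ennreal l))"
  have am: "(\<lambda>y. min (f y) (ennreal l)) \<in> borel_measurable (lebX X)" using fm by measurable
  have sa: "sets a = sets (borelX X)" unfolding a_def using sL by simp
  have XL: "X \<in> sets (lebX X)" using sets.top[of "lebX X"] by simp
  have fina: "finite_measure a"
  proof (rule finite_measureI)
    have spa: "space a = X" unfolding a_def by simp
    have "emeasure a X = (\<integral>\<^sup>+y. min (f y) (ennreal l) * indicator X y \<partial>lebX X)"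
      unfolding a_def using am XL by (simp add: emeasure_density)
    also have "\<dots> \<le> (\<integral>\<^sup>+y. f y * indicator X y \<partial>lebX X)"
      by (intro nn_integral_mono mult_right_mono) auto
    also have "\<dots> = emeasure M X" using Md[symmetric] fm XL by (simp add: emeasure_density)
    also have "\<dots> = 1" using emeasure_space_1 spM by simp
    finally show "emeasure a (space a) \<noteq> \<infinity>" using spa by (auto simp: top_unique)
  qed
  have aM: "a \<in> Mplus X" unfolding Mplus_def using fina sa by simp
  have aca: "absolutely_continuous (lebX X) a" unfolding a_def by (rule ac_density[OF am])
  have dsa: "dens_sup X a \<le> ennreal l" unfolding a_def
    by (rule dens_sup_density[OF X am]) auto
  have inner: "(\<integral>\<^sup>+y. emeasure (\<kappa> x y) K \<partial>M) \<le> ennreal C * ennreal l * emeasure (lebX X) K + E"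
    if x: "x \<in> X" for x
  proof -
    have km: "(\<lambda>y. emeasure (\<kappa> x y) K) \<in> borel_measurable (lebX X)" by (rule kmeas2[OF Kk K sL x])
    have "(\<integral>\<^sup>+y. emeasure (\<kappa> x y) K \<partial>M) = (\<integral>\<^sup>+y. f y * emeasure (\<kappa> x y) K \<partial>lebX X)"
      using Md[symmetric] by (simp add: nn_integral_density[OF fm km])
    also have "\<dots> = (\<integral>\<^sup>+y. min (f y) (ennreal l) * emeasure (\<kappa> x y) K + (f y - ennreal l) * emeasure (\<kappa> x y) K \<partial>lebX X)"
      by (rule nn_integral_cong) (simp add: ennreal_min_split distrib_right[symmetric])
    also have "\<dots> = (\<integral>\<^sup>+y. min (f y) (ennreal l) * emeasure (\<kappa> x y) K \<partial>lebX X) + (\<integral>\<^sup>+y. (f y - ennreal l) * emeasure (\<kappa> x y) K \<partial>lebX X)"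
      using am km fm by (intro nn_integral_add) auto
    also have "(\<integral>\<^sup>+y. min (f y) (ennreal l) * emeasure (\<kappa> x y) K \<partial>lebX X) = (\<integral>\<^sup>+y. emeasure (\<kappa> x y) K \<partial>a)"
      unfolding a_def by (rule nn_integral_density[OF am km, symmetric])
    also have "\<dots> = emeasure (kappa2 X \<kappa> a x) K" by (rule kappa2_emeasure[OF Kk sa x K, symmetric])
    also have "\<dots> \<le> dens_sup X (kappa2 X \<kappa> a x) * emeasure (lebX X) K"
      by (rule dens_bound[OF X _ sets_kappa2 K]) (use H1 aM aca x in blast)
    also have "\<dots> \<le> ennreal C * ennreal l * emeasure (lebX X) K"
    proof (rule mult_right_mono)
      have "dens_sup X (kappa2 X \<kappa> a x) \<le> ennreal C * dens_sup X a" using H2 aM aca x by blast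
      also have "\<dots> \<le> ennreal C * ennreal l" by (rule mult_left_mono[OF dsa]) simp
      finally show "dens_sup X (kappa2 X \<kappa> a x) \<le> ennreal C * ennreal l" .
    qed simp
    also have "(\<integral>\<^sup>+y. (f y - ennreal l) * emeasure (\<kappa> x y) K \<partial>lebX X) \<le> E"
      unfolding E_def
    proof (rule nn_integral_mono)
      fix y assume "y \<in> space (lebX X)"
      then have y: "y \<in> X" by simp
      have "emeasure (\<kappa> x y) K \<le> 1"
        using prob_space.emeasure_le_1[OF kprob(1)[OF Kk x y]] by simp
      then show "(f y - ennreal l) * emeasure (\<kappa> x y) K \<le> f y - ennreal l"
        using mult_left_mono[of "emeasure (\<kappa> x y) K" 1 "f y - ennreal l"] by simp
    qed
    finally show ?thesis by (simp add: add_mono)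
  qed
  have "emeasure (Fop X \<kappa> M) K = (\<integral>\<^sup>+x. \<integral>\<^sup>+y. emeasure (\<kappa> x y) K \<partial>M \<partial>M)"
    by (rule Fop_emeasure[OF Kk sM finite_measure_axioms K])
  also have "\<dots> \<le> (\<integral>\<^sup>+x. ennreal C * ennreal l * emeasure (lebX X) K + E \<partial>M)"
    by (rule nn_integral_mono) (use inner spM in auto)
  also have "\<dots> = ennreal C * ennreal l * emeasure (lebX X) K + E" by (simp add: emeasure_space_1)
  finally show ?thesis unfolding E_def f_def .
qed




lemma lebX_compact_finite:
  fixes X :: "'a::euclidean_space set"
  assumes X: "open X" and K: "compact K" "K \<subseteq> X"
  shows "emeasure (lebX X) K < \<infinity>"
proof -
  have "emeasure (lebX X) K = emeasure lborel K"
    unfolding lebX_def by (rule emeasure_restrict_space) (use X K in auto)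
  also have "\<dots> < \<infinity>" using K by (intro emeasure_bounded_finite compact_imp_bounded)
  finally show ?thesis .
qed

lemma real_ineq1:
  fixes a E C :: real
  assumes "0 \<le> a" "1 \<le> E" "0 < C"
  shows "a + C * a / (C + 1) * (E - 1) \<le> a * E"
proof -
  have "C * a / (C + 1) * (E - 1) = (C / (C + 1)) * (a * (E - 1))" by simp
  also have "\<dots> \<le> 1 * (a * (E - 1))"
    using assms by (intro mult_right_mono) auto
  finally show ?thesis by (simp add: algebra_simps)
qed

lemma part2:
  fixes X :: "'a::euclidean_space set"
  assumes X: "open X" and Kk: "stoch_kernel X \<kappa>" and sol: "is_solution X \<kappa> \<mu>"
    and acall: "\<forall>t\<ge>0. absolutely_continuous (lebX X) (\<mu> t)"
    and H1: "\<forall>\<nu>\<in>Mplus X. absolutely_continuous (lebX X) \<nu> \<longrightarrow> (\<forall>x\<in>X. absolutely_continuous (lebX X) (kappa2 X \<kappa> \<nu> x))"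
    and H2: "\<forall>\<nu>\<in>Mplus X. absolutely_continuous (lebX X) \<nu> \<longrightarrow> (\<forall>x\<in>X. dens_sup X (kappa2 X \<kappa> \<nu> x) \<le> ennreal C * dens_sup X \<nu>)"
    and C: "C > 0" and t: "0 \<le> t"
  shows "dens_sup X (\<mu> t) \<le> dens_sup X (\<mu> 0) * ennreal (exp (C * t))"
proof (cases "dens_sup X (\<mu> 0) = \<top>")
  case True
  then show ?thesis by simp
next
  case False
  let ?L = "lebX X"
  interpret L: sigma_finite_measure ?L by (rule sigma_finite_lebX[OF X])
  define l0 where "l0 = enn2real (dens_sup X (\<mu> 0))"
  have dl0: "dens_sup X (\<mu> 0) = ennreal l0" unfolding l0_def using False by (simp add: less_top)
  have l00: "0 \<le> l0" unfolding l0_def by simp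
  define ell where "ell r = l0 * exp (C * r)" for r
  have ell0: "0 \<le> ell r" for r unfolding ell_def using l00 by simp
  have sL: "sets ?L = sets (borelX X)" by (rule sets_lebX)
  have Pm: "\<mu> r \<in> Pmeas X" if "r \<ge> 0" for r using sol that unfolding is_solution_def by blast
  have ps: "prob_space (\<mu> r)" and sr: "sets (\<mu> r) = sets (borelX X)" and spr: "space (\<mu> r) = X"
    if "r \<ge> 0" for r using Pmeas_D[OF Pm[OF that]] by auto
  have fmr: "finite_measure (\<mu> r)" if "r \<ge> 0" for r using ps[OF that] by (simp add: prob_space_def)
  have ac: "absolutely_continuous ?L (\<mu> r)" if "r \<ge> 0" for r using acall that by blast
  define f where "f r = RN_deriv ?L (\<mu> r)" for r
  have fm: "f r \<in> borel_measurable ?L" for r unfolding f_def by simp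
  have Md: "density ?L (f r) = \<mu> r" if "r \<ge> 0" for r
    unfolding f_def by (rule L.density_RN_deriv[OF ac[OF that]]) (use sr[OF that] sL in simp)
  define EI where "EI r = (\<integral>\<^sup>+x. f r x - ennreal (ell r) \<partial>?L)" for r
  define e where "e r = enn2real (EI r)" for r
  have XL: "X \<in> sets ?L" using sets.top[of ?L] by simp
  have EI1: "EI r \<le> 1" if r0: "r \<ge> 0" for r
  proof -
    have "EI r \<le> (\<integral>\<^sup>+x. f r x * indicator X x \<partial>?L)"
      unfolding EI_def by (rule nn_integral_mono) (auto simp: indicator_def)
    also have "\<dots> = emeasure (\<mu> r) X"
      using Md[OF r0, symmetric] fm XL by (simp add: emeasure_density)
    also have "\<dots> = 1" using prob_space.emeasure_space_1[OF ps[OF r0]] spr[OF r0] by simp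
    finally show ?thesis .
  qed
  have EIe: "ennreal (e r) = EI r" if "r \<ge> 0" for r
    unfolding e_def using EI1[OF that] by (intro ennreal_enn2real) (simp add: le_less_trans)
  have e1: "e r \<le> 1" if "r \<ge> 0" for r
    using EIe[OF that] EI1[OF that] by (metis ennreal_le_1)
  have e0: "0 \<le> e r" for r unfolding e_def by simp
  define S where "S = (SUP r\<in>{0..t}. e r)"
  have bdd: "bdd_above (e ` {0..t})" by (rule bdd_aboveI[where M=1]) (auto intro: e1)
  have S0: "0 \<le> S"
  proof -
    have "e 0 \<le> S" unfolding S_def by (rule cSUP_upper[OF _ bdd]) (use t in simp)
    then show ?thesis using e0[of 0] by simp
  qed
  have eS: "e r \<le> S" if "r \<in> {0..t}" for r unfolding S_def by (rule cSUP_upper[OF that bdd])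
  have mu0K: "measure (\<mu> 0) K \<le> l0 * measure ?L K" if K: "K \<in> sets (borelX X)" and Kf: "emeasure ?L K < \<infinity>" for K
  proof -
    have "emeasure (\<mu> 0) K \<le> ennreal l0 * emeasure ?L K"
      using dens_bound[OF X ac[of 0] sr[of 0] K] dl0 by simp
    also have "\<dots> = ennreal (l0 * measure ?L K)"
      using Kf l00 by (simp add: emeasure_eq_ennreal_measure less_top ennreal_mult)
    finally show ?thesis
      using finite_measure.emeasure_eq_measure[OF fmr[of 0]] l00 by (simp add: ennreal_le_iff)
  qed
  have SBK: "measure (\<mu> r) K \<le> ell r * measure ?L K + (1 - exp (- r)) * S"
    if r: "r \<in> {0..t}" and K: "compact K" "K \<subseteq> X" for r K
  proof -
    have r0: "0 \<le> r" using r by simp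
    have KB: "K \<in> sets (borelX X)" by (rule compact_in_borelX[OF K])
    have Kf: "emeasure ?L K < \<infinity>" by (rule lebX_compact_finite[OF X K])
    define lam where "lam = measure ?L K"
    have lam0: "0 \<le> lam" unfolding lam_def by simp
    have elam: "emeasure ?L K = ennreal lam" unfolding lam_def using Kf by (simp add: emeasure_eq_ennreal_measure less_top)
    have Fb: "measure (Fop X \<kappa> (\<mu> r')) K \<le> C * ell r' * lam + S" if r': "r' \<in> {0..t}" for r'
    proof -
      have r'0: "0 \<le> r'" using r' by simp
      have "emeasure (Fop X \<kappa> (\<mu> r')) K \<le> ennreal C * ennreal (ell r') * emeasure ?L K + EI r'"
        unfolding EI_def f_def by (rule Fbound[OF X Kk Pm[OF r'0] ac[OF r'0] H1 H2 ell0 KB])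
      also have "\<dots> = ennreal (C * ell r' * lam + e r')"
        using elam EIe[OF r'0] C ell0[of r'] lam0 e0[of r'] by (simp add: ennreal_mult ennreal_plus)
      finally have "emeasure (Fop X \<kappa> (\<mu> r')) K \<le> ennreal (C * ell r' * lam + e r')" .
      moreover have "emeasure (Fop X \<kappa> (\<mu> r')) K = ennreal (measure (Fop X \<kappa> (\<mu> r')) K)"
        using Fop_prob(1)[OF Kk Pm[OF r'0]] by (simp add: prob_space_def finite_measure.emeasure_eq_measure)
      moreover have V0: "0 \<le> C * ell r' * lam + e r'" using C ell0[of r'] lam0 e0[of r'] by simp
      ultimately have "measure (Fop X \<kappa> (\<mu> r')) K \<le> C * ell r' * lam + e r'"
        by (metis ennreal_le_iff)
      then show ?thesis using eS[OF r'] by simp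
    qed
    define k where "k = C * (l0 * lam) / (C + 1)"
    have kC: "k * (C + 1) = C * l0 * lam" unfolding k_def using C by simp
    define G where "G r' = k * exp ((C + 1) * r') + S * exp r'" for r'
    define g where "g r' = C * l0 * lam * exp ((C + 1) * r') + S * exp r'" for r'
    have D1: "exp r * measure (\<mu> r) K \<le> measure (\<mu> 0) K + (G r - G 0)"
    proof (rule duhamel[OF X Kk sol r0 K])
      fix r' :: real
      have "(G has_real_derivative (k * (exp ((C + 1) * r') * (C + 1)) + S * exp r')) (at r')"
        unfolding G_def by (auto intro!: derivative_eq_intros)
      moreover have "k * (exp ((C + 1) * r') * (C + 1)) + S * exp r' = g r'"
        unfolding g_def using kC by (metis mult.assoc mult.commute)
      ultimately show "(G has_real_derivative g r') (at r')" by simp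
    next
      fix r' assume r': "r' \<in> {0..r}"
      then have r't: "r' \<in> {0..t}" using r by auto
      have "exp r' * measure (Fop X \<kappa> (\<mu> r')) K \<le> exp r' * (C * ell r' * lam + S)"
        using Fb[OF r't] by simp
      also have "\<dots> = g r'"
        unfolding g_def ell_def by (simp add: algebra_simps exp_add[symmetric])
      finally show "exp r' * measure (Fop X \<kappa> (\<mu> r')) K \<le> g r'" .
    qed
    have M0: "measure (\<mu> 0) K \<le> l0 * lam" unfolding lam_def by (rule mu0K[OF KB Kf])
    have A: "exp r * measure (\<mu> r) K \<le> l0 * lam + k * (exp ((C + 1) * r) - 1) + S * (exp r - 1)"
    proof -
      have "G r - G 0 = k * (exp ((C + 1) * r) - 1) + S * (exp r - 1)"
        unfolding G_def by (simp add: algebra_simps)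
      then show ?thesis using D1 M0 by linarith
    qed
    have "l0 * lam + k * (exp ((C + 1) * r) - 1) \<le> (l0 * lam) * exp ((C + 1) * r)"
      unfolding k_def by (rule real_ineq1) (use l00 lam0 C r0 in auto)
    with A have "exp r * measure (\<mu> r) K \<le> exp r * (ell r * lam + (1 - exp (- r)) * S)"
      unfolding ell_def by (simp add: algebra_simps exp_add[symmetric] exp_minus)
    then show ?thesis unfolding lam_def by simp
  qed
  have SB: "emeasure (\<mu> r) A \<le> ennreal (ell r) * emeasure ?L A + ennreal ((1 - exp (- r)) * S)"
    if r: "r \<in> {0..t}" and A: "A \<in> sets ?L" for r A
  proof -
    have r0: "0 \<le> r" using r by simp
    have AM: "A \<in> sets (\<mu> r)" using A sL sr[OF r0] by simp
    have AX: "A \<subseteq> X" using sets.sets_into_space[OF A] by simp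
    have c0: "0 \<le> (1 - exp (- r)) * S" using r0 S0 by simp
    have "emeasure (\<mu> r) A = (SUP K\<in>{K. K \<subseteq> A \<and> compact K}. emeasure (\<mu> r) K)"
      by (rule inner_reg[OF X fmr[OF r0] sr[OF r0] AM])
    also have "\<dots> \<le> ennreal (ell r) * emeasure ?L A + ennreal ((1 - exp (- r)) * S)"
    proof (rule SUP_least)
      fix K assume "K \<in> {K. K \<subseteq> A \<and> compact K}"
      then have KA: "K \<subseteq> A" and Kc: "compact K" by auto
      have KX: "K \<subseteq> X" using KA AX by auto
      have KL: "K \<in> sets ?L" using compact_in_borelX[OF Kc KX] sL by simp
      have Kf: "emeasure ?L K < \<infinity>" by (rule lebX_compact_finite[OF X Kc KX])
      have "emeasure (\<mu> r) K = ennreal (measure (\<mu> r) K)"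
        using finite_measure.emeasure_eq_measure[OF fmr[OF r0]] by simp
      also have "\<dots> \<le> ennreal (ell r * measure ?L K + (1 - exp (- r)) * S)"
        by (rule ennreal_leI[OF SBK[OF r Kc KX]])
      also have "\<dots> = ennreal (ell r) * emeasure ?L K + ennreal ((1 - exp (- r)) * S)"
        using ell0[of r] c0 Kf by (simp add: ennreal_plus ennreal_mult emeasure_eq_ennreal_measure less_top)
      also have "\<dots> \<le> ennreal (ell r) * emeasure ?L A + ennreal ((1 - exp (- r)) * S)"
        by (intro add_right_mono mult_left_mono emeasure_mono[OF KA A]) simp
      finally show "emeasure (\<mu> r) K \<le> ennreal (ell r) * emeasure ?L A + ennreal ((1 - exp (- r)) * S)" .
    qed
    finally show ?thesis .
  qed
  have eb: "e r \<le> (1 - exp (- r)) * S" if r: "r \<in> {0..t}" for r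
  proof -
    have r0: "0 \<le> r" using r by simp
    have c0: "0 \<le> (1 - exp (- r)) * S" using r0 S0 by simp
    define A where "A = {x \<in> space ?L. ennreal (ell r) < f r x}"
    have AL: "A \<in> sets ?L" unfolding A_def using fm[of r] by measurable
    have "emeasure (\<mu> r) A = (\<integral>\<^sup>+x. f r x * indicator A x \<partial>?L)"
      using Md[OF r0, symmetric] fm AL by (simp add: emeasure_density)
    also have "\<dots> = (\<integral>\<^sup>+x. (f r x - ennreal (ell r)) + ennreal (ell r) * indicator A x \<partial>?L)"
    proof (rule nn_integral_cong)
      fix x assume x: "x \<in> space ?L"
      show "f r x * indicator A x = (f r x - ennreal (ell r)) + ennreal (ell r) * indicator A x"
      proof (cases "x \<in> A")
        case True
        then have "ennreal (ell r) < f r x" unfolding A_def by simp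
        then have "min (f r x) (ennreal (ell r)) = ennreal (ell r)" by simp
        then have eq: "ennreal (ell r) + (f r x - ennreal (ell r)) = f r x"
          using ennreal_min_split[of "f r x" "ennreal (ell r)"] by metis
        have "indicator A x = (1::ennreal)" using True by simp
        then show ?thesis using eq by (metis add.commute mult.right_neutral)
      next
        case False
        then have "f r x \<le> ennreal (ell r)" unfolding A_def using x by auto
        then have "f r x - ennreal (ell r) = 0"
          by (simp add: diff_eq_0_iff_ennreal le_less_trans)
        then show ?thesis using False by simp
      qed
    qed
    also have "\<dots> = EI r + ennreal (ell r) * emeasure ?L A"
    proof -
      have i1: "(\<integral>\<^sup>+x. (f r x - ennreal (ell r)) + ennreal (ell r) * indicator A x \<partial>?L) =
          (\<integral>\<^sup>+x. f r x - ennreal (ell r) \<partial>?L) + (\<integral>\<^sup>+x. ennreal (ell r) * indicator A x \<partial>?L)"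
        by (rule nn_integral_add) (use fm[of r] AL in auto)
      have i2: "(\<integral>\<^sup>+x. ennreal (ell r) * indicator A x \<partial>?L) = ennreal (ell r) * emeasure ?L A"
        by (rule nn_integral_cmult_indicator[OF AL])
      show ?thesis unfolding EI_def by (simp only: i1 i2)
    qed
    finally have eqA: "emeasure (\<mu> r) A = EI r + ennreal (ell r) * emeasure ?L A" .
    have le1: "emeasure (\<mu> r) A \<le> 1"
      using prob_space.emeasure_le_1[OF ps[OF r0]] by simp
    have "ennreal (ell r) * emeasure ?L A \<le> EI r + ennreal (ell r) * emeasure ?L A"
      by (rule add_increasing) auto
    also have "\<dots> \<le> 1" using le1 eqA by simp
    also have "(1::ennreal) < \<top>" by simp
    finally have fin: "ennreal (ell r) * emeasure ?L A \<noteq> \<infinity>" by simp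
    have "EI r + ennreal (ell r) * emeasure ?L A \<le> ennreal (ell r) * emeasure ?L A + ennreal ((1 - exp (- r)) * S)"
      using SB[OF r AL] eqA by simp
    then have "ennreal (ell r) * emeasure ?L A + EI r \<le> ennreal (ell r) * emeasure ?L A + ennreal ((1 - exp (- r)) * S)"
      by (simp only: add.commute)
    then have "EI r \<le> ennreal ((1 - exp (- r)) * S)" using fin ennreal_add_left_cancel_le by metis
    then have "ennreal (e r) \<le> ennreal ((1 - exp (- r)) * S)" using EIe[OF r0] by simp
    then show ?thesis using c0 by (simp add: ennreal_le_iff)
  qed
  have "S \<le> (1 - exp (- t)) * S" unfolding S_def
  proof (rule cSUP_least)
    show "{0..t} \<noteq> {}" using t by simp
    fix r assume r: "r \<in> {0..t}"
    have "e r \<le> (1 - exp (- r)) * S" by (rule eb[OF r])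
    also have "\<dots> \<le> (1 - exp (- t)) * S" using r S0 by (intro mult_right_mono) auto
    finally show "e r \<le> (1 - exp (- t)) * (SUP r\<in>{0..t}. e r)" unfolding S_def .
  qed
  then have "exp (- t) * S \<le> 0" by (simp add: algebra_simps)
  then have S00: "S = 0" using S0 by (simp add: mult_le_0_iff)
  have "e t = 0" using eS[of t] e0[of t] t S00 by simp
  then have "EI t = 0" using EIe[OF t] by simp
  then have "AE x in ?L. f t x - ennreal (ell t) = 0"
    unfolding EI_def using fm[of t] by (subst (asm) nn_integral_0_iff_AE) auto
  then have "AE x in ?L. f t x \<le> ennreal (ell t)"
    by eventually_elim (simp add: diff_eq_0_iff_ennreal)
  then have "dens_sup X (\<mu> t) \<le> ennreal (ell t)"
    unfolding dens_sup_def f_def[symmetric] by (intro esssup_I fm)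
  also have "\<dots> = dens_sup X (\<mu> 0) * ennreal (exp (C * t))"
    unfolding dl0 ell_def using l00 by (simp add: ennreal_mult)
  finally show ?thesis .
qed


theorem proposition3p2:
  fixes X :: "'a::euclidean_space set"
    and \<kappa> :: "'a \<Rightarrow> 'a \<Rightarrow> 'a measure"
    and \<mu> :: "real \<Rightarrow> 'a measure"
  assumes "open X"
    and "stoch_kernel X \<kappa>"
    and "is_solution X \<kappa> \<mu>"
    and "absolutely_continuous (lebX X) (\<mu> 0)"
    and "\<forall>\<nu>\<in>Mplus X. absolutely_continuous (lebX X) \<nu> \<longrightarrow>
           (\<forall>y\<in>X. absolutely_continuous (lebX X) (kappa1 X \<kappa> \<nu> y)) \<and>
           (\<forall>x\<in>X. absolutely_continuous (lebX X) (kappa2 X \<kappa> \<nu> x))"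
  shows "(\<forall>t\<ge>0. absolutely_continuous (lebX X) (\<mu> t)) \<and>
         (\<forall>C::real. C > 0 \<longrightarrow>
            (\<forall>\<nu>\<in>Mplus X. absolutely_continuous (lebX X) \<nu> \<longrightarrow>
               (\<forall>x\<in>X. dens_sup X (kappa2 X \<kappa> \<nu> x) \<le> ennreal C * dens_sup X \<nu>)) \<longrightarrow>
            (\<forall>t\<ge>0. dens_sup X (\<mu> t) \<le> dens_sup X (\<mu> 0) * ennreal (exp (C * t))))"
proof -
  have H1: "\<forall>\<nu>\<in>Mplus X. absolutely_continuous (lebX X) \<nu> \<longrightarrow> (\<forall>x\<in>X. absolutely_continuous (lebX X) (kappa2 X \<kappa> \<nu> x))"
    using assms(5) by blast
  have P1: "\<forall>t\<ge>0. absolutely_continuous (lebX X) (\<mu> t)"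
    by (rule part1[OF assms(1-4) H1])
  show ?thesis
  proof (intro conjI allI impI)
    fix t :: real assume "0 \<le> t"
    then show "absolutely_continuous (lebX X) (\<mu> t)" using P1 by blast
  next
    fix C t :: real
    assume C: "C > 0"
      and H2: "\<forall>\<nu>\<in>Mplus X. absolutely_continuous (lebX X) \<nu> \<longrightarrow>
               (\<forall>x\<in>X. dens_sup X (kappa2 X \<kappa> \<nu> x) \<le> ennreal C * dens_sup X \<nu>)"
      and t: "0 \<le> t"
    show "dens_sup X (\<mu> t) \<le> dens_sup X (\<mu> 0) * ennreal (exp (C * t))"
      by (rule part2[OF assms(1-3) P1 H1 H2 C t])
  qed
qed

end
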